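(* Let $p \ge 1$ and let $\mathcal{D}=\{(x_i,y_i) \mid i=1,\dots,m,\ x_i\in\mathbb{R}^d,\ y_i\in\{-1,1\}\}$ be a finite labeled dataset with $x_i \neq x_j$ whenever $y_i \neq y_j$. Let $c>0$ be a scalar such that for all $i,j$, $y_i \neq y_j$ implies $\|x_i - x_j\|_p > c$. Then there exists a function $f:\mathbb{R}^d \to \mathbb{R}$ which is $\frac{2}{c}$-Lipschitz continuous (with respect to $\|\cdot\|_p$ on $\mathbb{R}^d$ and the absolute value on $\mathbb{R}$) such that for every $i$ and every $\delta\in\mathbb{R}^d$ with $\|\delta\|_p < \frac{c}{2}$, we have $\mathrm{sign}(f(x_i+\delta)) = y_i$.
   Context: A function $f$ is $k$-Lipschitz continuous if $|f(x_1)-f(x_2)| \le k\,\|x_1-x_2\|_p$ for all $x_1,x_2$ in its domain. $\|\cdot\|_p$ denotes the usual $L_p$ (Minkowski) norm on $\mathbb{R}^d$. *)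

theory Defs
  imports "HOL-Analysis.Analysis"
begin

definition pnorm :: "real \<Rightarrow> real ^ 'd \<Rightarrow> real" where
  "pnorm p x = (\<Sum>i\<in>UNIV. \<bar>x $ i\<bar> powr p) powr (1 / p)"

definition lipschitz_p :: "real \<Rightarrow> real \<Rightarrow> (real ^ 'd \<Rightarrow> real) \<Rightarrow> bool" where
  "lipschitz_p p k f \<longleftrightarrow> (\<forall>x1 x2. \<bar>f x1 - f x2\<bar> \<le> k * pnorm p (x1 - x2))"

end

theory Submission
  imports Defs
begin

lemma powr_conv_ge0:
  fixes u v t p :: real
  assumes "p \<ge> 1" "u \<ge> 0" "v \<ge> 0" "t \<ge> 0" "t \<le> 1"
  shows "((1 - t) * u + t * v) powr p \<le> (1 - t) * u powr p + t * v powr p"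
proof -
  have pw: "s powr p \<le> s" if "0 \<le> s" "s \<le> 1" for s :: real
  proof (cases "s = 0")
    case False
    then have "s powr p \<le> s powr 1" using that assms(1)
      by (intro powr_mono') auto
    then show ?thesis using that by simp
  qed (use assms in simp)
  show ?thesis
  proof (cases "u = 0 \<or> v = 0")
    case True
    then show ?thesis
    proof
      assume "u = 0"
      then have "((1 - t) * u + t * v) powr p = t powr p * v powr p"
        using assms by (simp add: powr_mult)
      also have "\<dots> \<le> t * v powr p" using pw[of t] assms by (intro mult_right_mono) auto
      finally show ?thesis using \<open>u = 0\<close> assms by simp
    next
      assume "v = 0"
      then have "((1 - t) * u + t * v) powr p = (1 - t) powr p * u powr p"
        using assms by (simp add: powr_mult)
      also have "\<dots> \<le> (1 - t) * u powr p" using pw[of "1 - t"] assms by (intro mult_right_mono) auto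
      finally show ?thesis using \<open>v = 0\<close> assms by simp
    qed
  next
    case False
    then have "u \<in> {0<..}" "v \<in> {0<..}" using assms by auto
    from convex_onD[OF powr_convex[OF assms(1)] assms(4,5) this] show ?thesis by simp
  qed
qed

lemma minkowski_aux:
  fixes a b :: "'i \<Rightarrow> real"
  assumes "finite I" "p \<ge> 1" "\<And>i. a i \<ge> 0" "\<And>i. b i \<ge> 0"
  shows "(\<Sum>i\<in>I. (a i + b i) powr p) powr (1/p) \<le>
         (\<Sum>i\<in>I. a i powr p) powr (1/p) + (\<Sum>i\<in>I. b i powr p) powr (1/p)"
proof -
  define A where "A = (\<Sum>i\<in>I. a i powr p) powr (1/p)"
  define B where "B = (\<Sum>i\<in>I. b i powr p) powr (1/p)"
  have SA: "(\<Sum>i\<in>I. a i powr p) = A powr p"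
    unfolding A_def using assms by (simp add: powr_powr sum_nonneg)
  have SB: "(\<Sum>i\<in>I. b i powr p) = B powr p"
    unfolding B_def using assms by (simp add: powr_powr sum_nonneg)
  have A0: "A \<ge> 0" "B \<ge> 0" unfolding A_def B_def by auto
  show ?thesis
  proof (cases "A = 0 \<or> B = 0")
    case True
    then show ?thesis
    proof
      assume "A = 0"
      then have "(\<Sum>i\<in>I. a i powr p) = 0" using SA by simp
      then have "\<forall>i\<in>I. a i powr p = 0" using assms by (subst (asm) sum_nonneg_eq_0_iff) auto
      then have "\<forall>i\<in>I. a i = 0" by simp
      then show ?thesis using \<open>A = 0\<close> unfolding A_def B_def by simp
    next
      assume "B = 0"
      then have "(\<Sum>i\<in>I. b i powr p) = 0" using SB by simp
      then have "\<forall>i\<in>I. b i powr p = 0" using assms by (subst (asm) sum_nonneg_eq_0_iff) auto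
      then have "\<forall>i\<in>I. b i = 0" by simp
      then show ?thesis using \<open>B = 0\<close> unfolding A_def B_def by simp
    qed
  next
    case False
    then have Ap: "A > 0" "B > 0" using A0 by auto
    define S where "S = A + B"
    define t where "t = B / S"
    have Sp: "S > 0" using Ap S_def by simp
    have t01: "t \<ge> 0" "t \<le> 1" "1 - t = A / S" using Ap Sp unfolding t_def S_def by (auto simp: field_simps)
    have pt: "(a i + b i) powr p \<le> S powr p * ((1 - t) * (a i / A) powr p + t * (b i / B) powr p)" for i
    proof -
      have e1: "(1 - t) * (a i / A) = a i / S" using t01(3) Ap Sp by simp
      have e2: "t * (b i / B) = b i / S" unfolding t_def using Ap Sp by simp
      have "a i + b i = S * ((1 - t) * (a i / A) + t * (b i / B))"
        unfolding e1 e2 using Sp by (simp add: field_simps)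
      then have "(a i + b i) powr p = S powr p * ((1 - t) * (a i / A) + t * (b i / B)) powr p"
        using Sp Ap t01 assms by (simp add: powr_mult)
      also have "\<dots> \<le> S powr p * ((1 - t) * (a i / A) powr p + t * (b i / B) powr p)"
        using Sp Ap t01 assms by (intro mult_left_mono powr_conv_ge0) auto
      finally show ?thesis .
    qed
    have "(\<Sum>i\<in>I. (a i + b i) powr p) \<le> (\<Sum>i\<in>I. S powr p * ((1 - t) * (a i / A) powr p + t * (b i / B) powr p))"
      by (intro sum_mono pt)
    also have "\<dots> = S powr p * ((1 - t) * (\<Sum>i\<in>I. a i powr p) / A powr p + t * (\<Sum>i\<in>I. b i powr p) / B powr p)"
      using Ap assms by (simp add: sum.distrib sum_distrib_left[symmetric] sum_divide_distrib[symmetric] powr_divide)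
    also have "\<dots> = S powr p" using Ap by (simp add: SA SB)
    finally have "(\<Sum>i\<in>I. (a i + b i) powr p) powr (1/p) \<le> (S powr p) powr (1/p)"
      using assms by (intro powr_mono2) (auto intro: sum_nonneg)
    also have "\<dots> = S" using Sp assms by (simp add: powr_powr)
    finally show ?thesis unfolding S_def A_def B_def .
  qed
qed

lemma pnorm_triangle:
  assumes "p \<ge> 1"
  shows "pnorm p (a + b) \<le> pnorm p a + pnorm p b"
proof -
  have "pnorm p (a + b) \<le> (\<Sum>i\<in>UNIV. (\<bar>a $ i\<bar> + \<bar>b $ i\<bar>) powr p) powr (1/p)"
    unfolding pnorm_def using assms
    by (intro powr_mono2 sum_mono sum_nonneg) (auto intro: powr_mono2 abs_triangle_ineq)
  also have "\<dots> \<le> pnorm p a + pnorm p b"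
    unfolding pnorm_def using assms by (intro minkowski_aux) auto
  finally show ?thesis .
qed

lemma pnorm_commute: "pnorm p (a - b) = pnorm p (b - a)"
  unfolding pnorm_def by (simp add: abs_minus_commute)

lemma pnorm_dist_tri:
  assumes "p \<ge> 1"
  shows "pnorm p (a - c) \<le> pnorm p (a - b) + pnorm p (b - c)"
  using pnorm_triangle[OF assms, of "a - b" "b - c"] by simp

definition Dst :: "real \<Rightarrow> real \<Rightarrow> (real ^ 'd) set \<Rightarrow> real ^ 'd \<Rightarrow> real" where
  "Dst p c S z = Min (insert c ((\<lambda>s. pnorm p (z - s)) ` S))"

lemma Dst_lip:
  assumes "finite S" "p \<ge> 1" "c \<ge> 0"
  shows "Dst p c S z1 \<le> Dst p c S z2 + pnorm p (z1 - z2)"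
proof -
  have fin: "finite (insert c ((\<lambda>s. pnorm p (z2 - s)) ` S))" using assms by simp
  have "Dst p c S z2 \<in> insert c ((\<lambda>s. pnorm p (z2 - s)) ` S)"
    unfolding Dst_def by (rule Min_in[OF fin]) simp
  then show ?thesis
  proof
    assume "Dst p c S z2 = c"
    have "Dst p c S z1 \<le> c" unfolding Dst_def using assms by (intro Min_le) auto
    moreover have "pnorm p (z1 - z2) \<ge> 0" unfolding pnorm_def by simp
    ultimately show ?thesis using \<open>Dst p c S z2 = c\<close> by simp
  next
    assume "Dst p c S z2 \<in> (\<lambda>s. pnorm p (z2 - s)) ` S"
    then obtain s where s: "s \<in> S" "Dst p c S z2 = pnorm p (z2 - s)" by auto
    have "Dst p c S z1 \<le> pnorm p (z1 - s)" unfolding Dst_def using assms s by (intro Min_le) auto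
    also have "\<dots> \<le> pnorm p (z1 - z2) + pnorm p (z2 - s)" by (rule pnorm_dist_tri[OF assms(2)])
    finally show ?thesis using s by simp
  qed
qed

lemma Dst_le:
  assumes "finite S" "s \<in> S"
  shows "Dst p c S z \<le> pnorm p (z - s)"
  unfolding Dst_def using assms by (intro Min_le) auto

lemma Dst_gt:
  assumes "finite S" "r < c" "\<And>s. s \<in> S \<Longrightarrow> r < pnorm p (z - s)"
  shows "r < Dst p c S z"
  unfolding Dst_def using assms by (subst Min_gr_iff) auto

theorem proposition1:
  fixes p c :: real and m :: nat
    and x :: "nat \<Rightarrow> real ^ 'd" and y :: "nat \<Rightarrow> real"
  assumes "p \<ge> 1"
    and "\<forall>i\<in>{1..m}. y i \<in> {-1, 1}"
    and "\<forall>i\<in>{1..m}. \<forall>j\<in>{1..m}. y i \<noteq> y j \<longrightarrow> x i \<noteq> x j"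
    and "c > 0"
    and "\<forall>i\<in>{1..m}. \<forall>j\<in>{1..m}. y i \<noteq> y j \<longrightarrow> pnorm p (x i - x j) > c"
  shows "\<exists>f :: real ^ 'd \<Rightarrow> real. lipschitz_p p (2 / c) f \<and>
           (\<forall>i\<in>{1..m}. \<forall>\<delta> :: real ^ 'd. pnorm p \<delta> < c / 2 \<longrightarrow> sgn (f (x i + \<delta>)) = y i)"
proof -
  define P where "P = x ` {i\<in>{1..m}. y i = 1}"
  define N where "N = x ` {i\<in>{1..m}. y i = -1}"
  have fP: "finite P" and fN: "finite N" unfolding P_def N_def by auto
  define f where "f z = (Dst p c N z - Dst p c P z) / c" for z
  have lip: "lipschitz_p p (2 / c) f"
    unfolding lipschitz_p_def
  proof (intro allI)
    fix z1 z2 :: "real ^ 'd"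
    have n: "\<bar>Dst p c S z1 - Dst p c S z2\<bar> \<le> pnorm p (z1 - z2)" if "finite S" for S
      using Dst_lip[OF that assms(1), of c z1 z2] Dst_lip[OF that assms(1), of c z2 z1] assms(4)
        pnorm_commute[of p z1 z2] by auto
    have "\<bar>f z1 - f z2\<bar> = \<bar>(Dst p c N z1 - Dst p c N z2) - (Dst p c P z1 - Dst p c P z2)\<bar> / c"
      unfolding f_def using assms(4) by (simp add: abs_divide diff_divide_distrib[symmetric] algebra_simps)
    also have "\<dots> \<le> (2 * pnorm p (z1 - z2)) / c"
      using n[OF fP] n[OF fN] assms(4) by (intro divide_right_mono) auto
    finally show "\<bar>f z1 - f z2\<bar> \<le> 2 / c * pnorm p (z1 - z2)" by simp
  qed
  have key: "Dst p c T (x i + \<delta>) < c / 2 \<and> c / 2 < Dst p c U (x i + \<delta>)"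
    if i: "i \<in> {1..m}" and d: "pnorm p \<delta> < c / 2"
      and T: "T = x ` {j\<in>{1..m}. y j = y i}" and U: "U = x ` {j\<in>{1..m}. y j \<noteq> y i}"
    for i \<delta> T U
  proof
    have "Dst p c T (x i + \<delta>) \<le> pnorm p (x i + \<delta> - x i)"
      using i T by (intro Dst_le) auto
    then show "Dst p c T (x i + \<delta>) < c / 2" using d by simp
  next
    show "c / 2 < Dst p c U (x i + \<delta>)"
    proof (rule Dst_gt)
      show "finite U" using U by simp
      show "c / 2 < c" using assms(4) by simp
      fix s assume "s \<in> U"
      then obtain j where j: "j \<in> {1..m}" "y j \<noteq> y i" "s = x j" using U by auto
      have "c < pnorm p (x i - x j)" using assms(5) i j by auto
      also have "\<dots> \<le> pnorm p (x i - (x i + \<delta>)) + pnorm p (x i + \<delta> - x j)"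
        by (rule pnorm_dist_tri[OF assms(1)])
      also have "pnorm p (x i - (x i + \<delta>)) = pnorm p \<delta>"
        using pnorm_commute[of p "x i" "x i + \<delta>"] by simp
      finally show "c / 2 < pnorm p (x i + \<delta> - s)" using d j by simp
    qed
  qed
  have sg: "\<forall>i\<in>{1..m}. \<forall>\<delta> :: real ^ 'd. pnorm p \<delta> < c / 2 \<longrightarrow> sgn (f (x i + \<delta>)) = y i"
  proof (intro ballI allI impI)
    fix i \<delta> assume i: "i \<in> {1..m}" and d: "pnorm p (\<delta> :: real ^ 'd) < c / 2"
    have yi: "y i = -1 \<or> y i = 1" using assms(2) i by auto
    then show "sgn (f (x i + \<delta>)) = y i"
    proof
      assume "y i = 1"
      then have "P = x ` {j\<in>{1..m}. y j = y i}" "N = x ` {j\<in>{1..m}. y j \<noteq> y i}"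
        unfolding P_def N_def using assms(2) by (auto intro!: image_cong)
      from key[OF i d this] have "f (x i + \<delta>) > 0" unfolding f_def using assms(4) by simp
      then show ?thesis using \<open>y i = 1\<close> by simp
    next
      assume "y i = -1"
      then have "N = x ` {j\<in>{1..m}. y j = y i}" "P = x ` {j\<in>{1..m}. y j \<noteq> y i}"
        unfolding P_def N_def using assms(2) by (auto intro!: image_cong)
      from key[OF i d this] have "f (x i + \<delta>) < 0" unfolding f_def using assms(4)
        by (simp add: divide_neg_pos)
      then show ?thesis using \<open>y i = -1\<close> by simp
    qed
  qed
  show ?thesis using lip sg by blast
qed

end
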